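(* Assume Hypothesis 2 below. Then for every $x<\mu^{-1}$, $\mathbb{P}(\bar\tau_0^{n,D}\le x)\to0$ as $n\to\infty$.
   Context: Hypothesis 2 (M/M/1/1+D-EDF systems): for each $n\ge1$, an M/M/1/1+GI-EDF queue (Poisson arrivals, one non-idling server, infinite buffer, non-preemptive Earliest-Deadline-First discipline, residual time credits decreasing at unit rate, a customer whose residual credit reaches $0$ before entering service is lost) such that: initially there are $n+1$ customers in the buffer, all with time credit $nd$, where $d>0$; the arrival intensity $\lambda^n$ satisfies $\lambda^n\to\lambda>0$; service durations are i.i.d. exponential with parameter $\mu^n$, $\mu^n\to\mu$ where $d^{-1}<\mu<\lambda$; the initial time credit of every arriving customer is the deterministic number $d^n$, with $d^n/n\to d$. Let $\nu^{n,D}_t$ be its profile (point measure with a unit atom at the residual time credit of each customer waiting in the buffer at $t$ and of each customer lost up to $t$), $\tau_0^{n,D}=\inf\{t\ge0:\nu^{n,D}_t((0,\infty))=0\}$ the first time the buffer is empty, and $\bar\tau_0^{n,D}=\tau_0^{n,D}/n$. *)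

theory Defs
  imports "HOL-Probability.Probability"
begin

text \<open>Deterministic dynamics of a single-server, non-idling, non-preemptive EDF queue
with reneging (customers whose residual credit hits 0 while waiting are lost).
Customers are indexed by nat; arr k is the arrival time, dl k the absolute deadline
(arrival time + initial time credit), so the residual credit at time t is dl k - t.
S j is the duration of the j-th service (in order of service).\<close>

definition waiting :: "(nat \<Rightarrow> real) \<Rightarrow> (nat \<Rightarrow> real) \<Rightarrow> real \<Rightarrow> nat set \<Rightarrow> nat set" where
  "waiting arr dl t X = {k. arr k \<le> t \<and> t < dl k \<and> k \<notin> X}"

definition edf_pick :: "(nat \<Rightarrow> real) \<Rightarrow> nat set \<Rightarrow> nat" where
  "edf_pick dl E = (LEAST k. k \<in> E \<and> (\<forall>k'\<in>E. dl k \<le> dl k'))"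

text \<open>Given the time f at which the server becomes free and the set X of customers
already taken into service, the next service start: immediately if someone is waiting
(non-idling), otherwise at the next arrival.\<close>
definition next_start :: "(nat \<Rightarrow> real) \<Rightarrow> (nat \<Rightarrow> real) \<Rightarrow> real \<Rightarrow> nat set \<Rightarrow> real" where
  "next_start arr dl f X =
     (if waiting arr dl f X \<noteq> {} then f else Inf {arr k | k. k \<notin> X \<and> f < arr k})"

primrec sched_state :: "(nat \<Rightarrow> real) \<Rightarrow> (nat \<Rightarrow> real) \<Rightarrow> (nat \<Rightarrow> real) \<Rightarrow> nat \<Rightarrow> real \<times> nat set" where
  "sched_state arr dl S 0 = (0, {})"
| "sched_state arr dl S (Suc j) =
     (let f = fst (sched_state arr dl S j); X = snd (sched_state arr dl S j);
          t = next_start arr dl f X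
      in (t + S j, insert (edf_pick dl (waiting arr dl t X)) X))"

definition start_time :: "(nat \<Rightarrow> real) \<Rightarrow> (nat \<Rightarrow> real) \<Rightarrow> (nat \<Rightarrow> real) \<Rightarrow> nat \<Rightarrow> real" where
  "start_time arr dl S j = next_start arr dl (fst (sched_state arr dl S j)) (snd (sched_state arr dl S j))"

definition served_cust :: "(nat \<Rightarrow> real) \<Rightarrow> (nat \<Rightarrow> real) \<Rightarrow> (nat \<Rightarrow> real) \<Rightarrow> nat \<Rightarrow> nat" where
  "served_cust arr dl S j = edf_pick dl (waiting arr dl (start_time arr dl S j) (snd (sched_state arr dl S j)))"

text \<open>Customers in the buffer at time t: arrived, residual credit > 0, not yet taken into
service. This is the set of atoms of the profile nu_t in (0,infinity).\<close>
definition buffer :: "(nat \<Rightarrow> real) \<Rightarrow> (nat \<Rightarrow> real) \<Rightarrow> (nat \<Rightarrow> real) \<Rightarrow> real \<Rightarrow> nat set" where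
  "buffer arr dl S t = {k. arr k \<le> t \<and> t < dl k \<and>
       \<not> (\<exists>j. start_time arr dl S j \<le> t \<and> served_cust arr dl S j = k)}"

text \<open>First time the buffer is empty (inf of the empty set = infinity).\<close>
definition tau0 :: "(nat \<Rightarrow> real) \<Rightarrow> (nat \<Rightarrow> real) \<Rightarrow> (nat \<Rightarrow> real) \<Rightarrow> ereal" where
  "tau0 arr dl S = Inf {ereal t | t. 0 \<le> t \<and> buffer arr dl S t = {}}"

text \<open>The n-th system: customers 0..n are present at time 0 with credit n*d; customer
n+1+i is the (i+1)-th arrival, at time A 0 + ... + A i (A = i.i.d. interarrival times),
with initial credit dn.\<close>
definition arr_n :: "nat \<Rightarrow> (nat \<Rightarrow> real) \<Rightarrow> nat \<Rightarrow> real" where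
  "arr_n n A k = (if k \<le> n then 0 else (\<Sum>m\<le>k - (n + 1). A m))"

definition dl_n :: "nat \<Rightarrow> real \<Rightarrow> real \<Rightarrow> (nat \<Rightarrow> real) \<Rightarrow> nat \<Rightarrow> real" where
  "dl_n n d dn A k = (if k \<le> n then real n * d else arr_n n A k + dn)"

definition taubar :: "nat \<Rightarrow> real \<Rightarrow> real \<Rightarrow> (nat \<Rightarrow> real) \<Rightarrow> (nat \<Rightarrow> real) \<Rightarrow> ereal" where
  "taubar n d dn A S = tau0 (arr_n n A) (dl_n n d dn A) S / ereal (real n)"

text \<open>Outer probability (coincides with the probability on measurable events).\<close>
definition outer_prob :: "'a measure \<Rightarrow> 'a set \<Rightarrow> real" where
  "outer_prob M E = Inf {measure M B | B. B \<in> sets M \<and> E \<inter> space M \<subseteq> B}"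

end

theory Submission
  imports Defs
begin


lemma arr_n_ge0:
  assumes "\<And>m. A m \<ge> 0" shows "arr_n n A k \<ge> 0"
  using assms unfolding arr_n_def by (auto intro: sum_nonneg)

lemma exists_late_arrival:
  assumes A0: "\<And>m. A m \<ge> 0" and unb: "\<And>c. \<exists>m. c < (\<Sum>l\<le>m. A l)"
    and fin: "finite X"
  shows "\<exists>k. k \<notin> X \<and> f < arr_n n A k"
proof -
  obtain m where m: "f < (\<Sum>l\<le>m. A l)" using unb by blast
  obtain K where K: "\<forall>k\<in>X. k < K" using fin finite_nat_bounded by (metis lessThan_iff subsetD)
  define k where "k = n + 1 + m + K"
  have "k \<notin> X" using K k_def by auto
  have "(\<Sum>l\<le>m. A l) \<le> (\<Sum>l\<le>m+K. A l)"
    by (rule sum_mono2) (auto simp: A0)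
  moreover have "arr_n n A k = (\<Sum>l\<le>m+K. A l)" unfolding arr_n_def k_def by simp
  ultimately show ?thesis using m \<open>k \<notin> X\<close> by (intro exI[of _ k]) auto
qed

lemma next_start_ge:
  assumes A0: "\<And>m. A m \<ge> 0" and unb: "\<And>c. \<exists>m. c < (\<Sum>l\<le>m. A l)"
    and fin: "finite X"
  shows "f \<le> next_start (arr_n n A) dl f X"
proof (cases "waiting (arr_n n A) dl f X \<noteq> {}")
  case True then show ?thesis unfolding next_start_def by simp
next
  case False
  obtain k where "k \<notin> X" "f < arr_n n A k" using exists_late_arrival[OF A0 unb fin] by blast
  then have ne: "{arr_n n A k | k. k \<notin> X \<and> f < arr_n n A k} \<noteq> {}" by blast
  have "f \<le> Inf {arr_n n A k | k. k \<notin> X \<and> f < arr_n n A k}"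
    by (rule cInf_greatest[OF ne]) auto
  then show ?thesis using False unfolding next_start_def by simp
qed

lemma sched_fin: "finite (snd (sched_state arr dl S j)) \<and> card (snd (sched_state arr dl S j)) \<le> j"
proof (induction j)
  case 0 then show ?case by simp
next
  case (Suc j)
  then show ?case by (auto simp: Let_def card_insert_if)
qed

lemma sched_fst_Suc: "fst (sched_state arr dl S (Suc j)) = start_time arr dl S j + S j"
  by (simp add: Let_def start_time_def)

lemma start_ge_fst:
  assumes A0: "\<And>m. A m \<ge> 0" and unb: "\<And>c. \<exists>m. c < (\<Sum>l\<le>m. A l)"
  shows "fst (sched_state (arr_n n A) dl S j) \<le> start_time (arr_n n A) dl S j"
  unfolding start_time_def using next_start_ge[OF A0 unb] sched_fin by blast

lemma fst_ge_sum:
  assumes A0: "\<And>m. A m \<ge> 0" and unb: "\<And>c. \<exists>m. c < (\<Sum>l\<le>m. A l)"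
  shows "(\<Sum>i<j. S i) \<le> fst (sched_state (arr_n n A) dl S j)"
proof (induction j)
  case 0 then show ?case by simp
next
  case (Suc j)
  then show ?case using start_ge_fst[OF A0 unb, where dl=dl and S=S and j=j and n=n] sched_fst_Suc[of "arr_n n A" dl S j] by simp
qed

lemma start_ge_sum:
  assumes A0: "\<And>m. A m \<ge> 0" and unb: "\<And>c. \<exists>m. c < (\<Sum>l\<le>m. A l)"
    and S0: "\<And>i. S i \<ge> 0" and j: "n \<le> j"
  shows "(\<Sum>i<n. S i) \<le> start_time (arr_n n A) dl S j"
proof -
  have "(\<Sum>i<n. S i) \<le> (\<Sum>i<j. S i)" by (rule sum_mono2) (use j S0 in auto)
  also have "\<dots> \<le> fst (sched_state (arr_n n A) dl S j)" by (rule fst_ge_sum[OF A0 unb])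
  also have "\<dots> \<le> start_time (arr_n n A) dl S j" by (rule start_ge_fst[OF A0 unb])
  finally show ?thesis .
qed

lemma buffer_nonempty:
  assumes A0: "\<And>m. A m \<ge> 0" and unb: "\<And>c. \<exists>m. c < (\<Sum>l\<le>m. A l)"
    and S0: "\<And>i. S i \<ge> 0"
    and t0: "0 \<le> t" and t1: "t < real n * d" and t2: "t < (\<Sum>i<n. S i)"
  shows "buffer (arr_n n A) (dl_n n d dn A) S t \<noteq> {}"
proof
  assume emp: "buffer (arr_n n A) (dl_n n d dn A) S t = {}"
  have "{0..n} \<subseteq> served_cust (arr_n n A) (dl_n n d dn A) S ` {..<n}"
  proof
    fix k assume k: "k \<in> {0..n}"
    then have "k \<notin> buffer (arr_n n A) (dl_n n d dn A) S t" using emp by auto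
    moreover have "arr_n n A k \<le> t" "t < dl_n n d dn A k" using k t0 t1
      by (auto simp: arr_n_def dl_n_def)
    ultimately obtain j where j: "start_time (arr_n n A) (dl_n n d dn A) S j \<le> t"
      "served_cust (arr_n n A) (dl_n n d dn A) S j = k"
      unfolding buffer_def by auto
    have "j < n"
    proof (rule ccontr)
      assume "\<not> j < n"
      then have "(\<Sum>i<n. S i) \<le> start_time (arr_n n A) (dl_n n d dn A) S j"
        by (intro start_ge_sum[OF A0 unb S0]) auto
      then show False using j t2 by linarith
    qed
    then show "k \<in> served_cust (arr_n n A) (dl_n n d dn A) S ` {..<n}" using j by auto
  qed
  then have "card {0..n} \<le> card (served_cust (arr_n n A) (dl_n n d dn A) S ` {..<n})"
    by (intro card_mono) auto
  also have "\<dots> \<le> card {..<n}" by (rule card_image_le) simp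
  finally show False by simp
qed

lemma tau0_ge:
  assumes A0: "\<And>m. A m \<ge> 0" and unb: "\<And>c. \<exists>m. c < (\<Sum>l\<le>m. A l)"
    and S0: "\<And>i. S i \<ge> 0"
  shows "ereal (min (real n * d) (\<Sum>i<n. S i)) \<le> tau0 (arr_n n A) (dl_n n d dn A) S"
  unfolding tau0_def
proof (rule Inf_greatest)
  fix y assume "y \<in> {ereal t |t. 0 \<le> t \<and> buffer (arr_n n A) (dl_n n d dn A) S t = {}}"
  then obtain t where t: "y = ereal t" "0 \<le> t" "buffer (arr_n n A) (dl_n n d dn A) S t = {}" by blast
  have "\<not> (t < real n * d \<and> t < (\<Sum>i<n. S i))"
    using buffer_nonempty[where A=A and S=S and t=t and n=n and d=d and dn=dn, OF A0 unb S0 t(2)] t(3) by blast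
  then show "ereal (min (real n * d) (\<Sum>i<n. S i)) \<le> y" using t(1) by (auto simp: min_def)
qed

lemma taubar_gt:
  assumes A0: "\<And>m. A m \<ge> 0" and unb: "\<And>c. \<exists>m. c < (\<Sum>l\<le>m. A l)"
    and S0: "\<And>i. S i \<ge> 0" and n: "n \<ge> 1" and xd: "x < d"
    and xs: "real n * x < (\<Sum>i<n. S i)"
  shows "ereal x < taubar n d dn A S"
proof -
  let ?T = "min (real n * d) (\<Sum>i<n. S i)"
  have T: "real n * x < ?T" using xs xd n by (auto intro: mult_strict_left_mono)
  have ge: "ereal ?T \<le> tau0 (arr_n n A) (dl_n n d dn A) S" by (rule tau0_ge[OF A0 unb S0])
  have np: "real n > 0" using n by simp
  show ?thesis unfolding taubar_def
  proof (cases "tau0 (arr_n n A) (dl_n n d dn A) S")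
    case (real r)
    then have "real n * x < r" using ge T by (auto simp: min_def split: if_splits)
    then have "x < r / real n" using np by (simp add: field_simps)
    then show "ereal x < tau0 (arr_n n A) (dl_n n d dn A) S / ereal (real n)" using real np by simp
  next
    case PInf then show "ereal x < tau0 (arr_n n A) (dl_n n d dn A) S / ereal (real n)"
      using np by simp
  next
    case MInf then show "ereal x < tau0 (arr_n n A) (dl_n n d dn A) S / ereal (real n)"
      using ge by (simp add: min_def)
  qed
qed



lemma (in prob_space) indep_vars_reindex_inj:
  assumes ind: "indep_vars M' Z UNIV" and inj: "inj f"
  shows "indep_vars (\<lambda>j. M' (f j)) (\<lambda>j. Z (f j)) UNIV"
proof -
  define F where "F i = {Z i -` A \<inter> space M | A. A \<in> sets (M' i)}" for i
  have rv: "\<forall>i. random_variable (M' i) (Z i)" and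
    ins: "indep_sets F UNIV"
    using ind unfolding indep_vars_def2 F_def by auto
  have "indep_sets (\<lambda>j. F (f j)) UNIV"
  proof (rule indep_setsI)
    fix i show "F (f i) \<subseteq> events"
      using ins unfolding indep_sets_def by blast
  next
    fix J and A assume J: "J \<noteq> {}" "J \<subseteq> UNIV" "finite J"
      and A: "\<forall>j\<in>J. A j \<in> F (f j)"
    define B where "B s = A (inv f s)" for s
    have B: "\<forall>s\<in>f ` J. B s \<in> F s"
    proof
      fix s assume "s \<in> f ` J"
      then obtain j where j: "j \<in> J" "s = f j" by blast
      have "A j \<in> F (f j)" using A j(1) by blast
      then show "B s \<in> F s"
        unfolding B_def j(2) inv_f_f[OF inj] .
    qed
    have "prob (\<Inter>s\<in>f ` J. B s) = (\<Prod>s\<in>f ` J. prob (B s))"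
      by (rule indep_setsD[OF ins _ _ _ B]) (use J in auto)
    moreover have "(\<Inter>s\<in>f ` J. B s) = (\<Inter>j\<in>J. A j)" using inj by (simp add: B_def)
    moreover have "(\<Prod>s\<in>f ` J. prob (B s)) = (\<Prod>j\<in>J. prob (A j))"
      using inj by (subst prod.reindex) (simp_all add: B_def inj_on_def)
    ultimately show "prob (\<Inter>j\<in>J. A j) = (\<Prod>j\<in>J. prob (A j))" by simp
  qed
  then show ?thesis using rv unfolding indep_vars_def2 F_def by auto
qed


lemma (in prob_space) erlang_sum_bound:
  assumes ind: "indep_vars (\<lambda>_. borel) S UNIV"
    and dist: "\<And>j. distributed M lborel (S j) (exponential_density l)"
    and l: "0 < l" and n: "n \<ge> 1" and lx: "l * x < 1"
  shows "prob {\<omega>\<in>space M. (\<Sum>i<n. S i \<omega>) \<le> real n * x} \<le> 1 / (real n * (1 - l * x)\<^sup>2)"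
proof -
  define Y where "Y \<omega> = (\<Sum>i<n. S i \<omega>)" for \<omega>
  have D: "distributed M lborel Y (erlang_density (n - 1) l)"
    unfolding Y_def using exponential_distributed_sum[where X=S and I="{..<n}", OF _ _ l dist]
      indep_vars_subset[OF ind] n by (auto simp: lessThan_empty_iff)
  have [measurable]: "Y \<in> borel_measurable M" using distributed_measurable[OF D] by simp
  have E: "expectation Y = real n / l"
    using erlang_ith_moment[OF l D, of 1] n by (simp add: fact_reduce[of n])
  have V: "variance Y = real n / l\<^sup>2"
    using erlang_distributed_variance[OF l D] n by simp
  have I2: "integrable M (\<lambda>x. Y x ^ 2)" by (rule erlang_ith_moment_integrable[OF l D])
  define a where "a = real n * (1 - l * x) / l"
  have np: "real n > 0" using n by simp
  have a: "a > 0" unfolding a_def using np l lx by simp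
  have "prob {\<omega>\<in>space M. Y \<omega> \<le> real n * x} \<le> prob {\<omega>\<in>space M. \<bar>Y \<omega> - expectation Y\<bar> \<ge> a}"
  proof (rule finite_measure_mono)
    show "{\<omega>\<in>space M. Y \<omega> \<le> real n * x} \<subseteq> {\<omega>\<in>space M. \<bar>Y \<omega> - expectation Y\<bar> \<ge> a}"
    proof safe
      fix \<omega> assume "Y \<omega> \<le> real n * x"
      moreover have "a = real n / l - real n * x" unfolding a_def using l by (simp add: field_simps)
      ultimately show "a \<le> \<bar>Y \<omega> - expectation Y\<bar>" unfolding E by linarith
    qed
  qed measurable
  also have "\<dots> \<le> variance Y / a\<^sup>2" by (rule Chebyshev_inequality) (use I2 a in auto)
  also have "\<dots> = 1 / (real n * (1 - l * x)\<^sup>2)"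
  proof -
    define c where "c = (1 - l * x)\<^sup>2"
    have c: "c > 0" unfolding c_def using lx by simp
    have "variance Y / a\<^sup>2 = (real n / l\<^sup>2) / (real n ^ 2 * c / l\<^sup>2)"
      unfolding V a_def c_def by (simp add: power_divide power_mult_distrib)
    also have "\<dots> = 1 / (real n * c)" using np l c by (simp add: field_simps power2_eq_square)
    finally show ?thesis unfolding c_def .
  qed
  finally show ?thesis unfolding Y_def .
qed


lemma (in prob_space) exp_AE_nonneg:
  assumes "distributed M lborel X (exponential_density l)"
  shows "AE \<omega> in M. 0 \<le> X \<omega>"
  by (subst distributed_AE2[OF assms]) (auto simp: exponential_density_def)

lemma (in prob_space) tail_small_null:
  fixes A :: "nat \<Rightarrow> _ \<Rightarrow> real"
  assumes ind: "indep_vars (\<lambda>_. borel) A UNIV"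
    and dist: "\<And>j. distributed M lborel (A j) (exponential_density l)"
    and l: "0 < l"
  shows "AE \<omega> in M. \<exists>m\<ge>N. 1 \<le> A m \<omega>"
proof -
  have [measurable]: "A j \<in> borel_measurable M" for j using distributed_measurable[OF dist[of j]] by simp
  define q where "q = 1 - exp (- l)"
  have q0: "0 \<le> q" "q < 1" unfolding q_def using l by auto
  define Nset where "Nset = {\<omega>\<in>space M. \<forall>m\<ge>N. A m \<omega> < 1}"
  have Ns: "Nset \<in> events" unfolding Nset_def
  proof (rule sets.sets_Collect_countable_All[where P="\<lambda>m \<omega>. N \<le> m \<longrightarrow> A m \<omega> < 1"])
    fix m show "{\<omega>\<in>space M. N \<le> m \<longrightarrow> A m \<omega> < 1} \<in> events"
      by (cases "N \<le> m") auto
  qed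
  have bound: "prob Nset \<le> q ^ Suc K" for K
  proof -
    have "prob Nset \<le> prob (\<Inter>m\<in>{N..N+K}. A m -` {..<1} \<inter> space M)"
      by (rule finite_measure_mono) (auto simp: Nset_def)
    also have "\<dots> = (\<Prod>m\<in>{N..N+K}. prob (A m -` {..<1} \<inter> space M))"
      by (rule indep_varsD[OF ind]) auto
    also have "\<dots> \<le> (\<Prod>m\<in>{N..N+K}. q)"
    proof (rule prod_mono)
      fix m assume "m \<in> {N..N+K}"
      have "prob (A m -` {..<1} \<inter> space M) \<le> \<P>(x in M. A m x \<le> 1)"
        by (rule finite_measure_mono) auto
      also have "\<dots> = q" using exponential_distributedD_le[OF dist[of m] _ l, of 1] by (simp add: q_def)
      finally show "0 \<le> prob (A m -` {..<1} \<inter> space M) \<and> prob (A m -` {..<1} \<inter> space M) \<le> q" by simp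
    qed
    also have "\<dots> = q ^ Suc K" by simp
    finally show ?thesis .
  qed
  have "prob Nset \<le> 0"
  proof (rule ccontr)
    assume "\<not> prob Nset \<le> 0"
    then have p: "prob Nset > 0" by simp
    have lim: "(\<lambda>K. q ^ Suc K) \<longlonglongrightarrow> 0"
      by (rule LIMSEQ_Suc) (rule LIMSEQ_power_zero, use q0 in simp)
    have "eventually (\<lambda>K. q ^ Suc K < prob Nset) sequentially"
      using order_tendstoD(2)[OF lim p] .
    then obtain K where "q ^ Suc K < prob Nset"
      unfolding eventually_sequentially by blast
    then show False using bound[of K] by simp
  qed
  then have "emeasure M Nset = 0" using Ns measure_nonneg[of M Nset] by (simp add: emeasure_eq_measure)
  then show ?thesis
    by (subst AE_iff_measurable[OF Ns]) (auto simp: Nset_def not_le dest: leD)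
qed



lemma unbounded_from_often:
  fixes A :: "nat \<Rightarrow> real"
  assumes A0: "\<And>m. A m \<ge> 0" and often: "\<And>N. \<exists>m\<ge>N. 1 \<le> A m"
  shows "\<exists>m. c < (\<Sum>l\<le>m. A l)"
proof -
  have "\<exists>m. real K \<le> (\<Sum>l\<le>m. A l)" for K
  proof (induction K)
    case 0 show ?case by (auto intro: sum_nonneg A0)
  next
    case (Suc K)
    then obtain m where m: "real K \<le> (\<Sum>l\<le>m. A l)" by blast
    obtain m' where m': "m' \<ge> Suc m" "1 \<le> A m'" using often by blast
    have "(\<Sum>l\<le>m. A l) + A m' = (\<Sum>l\<in>insert m' {..m}. A l)" using m' by simp
    also have "\<dots> \<le> (\<Sum>l\<le>m'. A l)" by (rule sum_mono2) (use m' A0 in auto)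
    finally show ?case using m m' by (intro exI[of _ m']) simp
  qed
  then obtain m where "real (nat \<lceil>c\<rceil> + 1) \<le> (\<Sum>l\<le>m. A l)" by blast
  moreover have "c < real (nat \<lceil>c\<rceil> + 1)" by linarith
  ultimately show ?thesis by (intro exI[of _ m]) linarith
qed

theorem mainTheorem4:
  fixes M :: "nat \<Rightarrow> 'a measure"
    and A S :: "nat \<Rightarrow> nat \<Rightarrow> 'a \<Rightarrow> real"
    and lam mu dn :: "nat \<Rightarrow> real"
    and lam0 mu0 d x :: real
  assumes ps: "\<And>n. n \<ge> 1 \<Longrightarrow> prob_space (M n)"
    and indep: "\<And>n. n \<ge> 1 \<Longrightarrow>
       prob_space.indep_vars (M n) (\<lambda>_. borel) (\<lambda>s. case s of Inl i \<Rightarrow> A n i | Inr j \<Rightarrow> S n j) UNIV"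
    and distA: "\<And>n i. n \<ge> 1 \<Longrightarrow> distributed (M n) lborel (A n i) (exponential_density (lam n))"
    and distS: "\<And>n j. n \<ge> 1 \<Longrightarrow> distributed (M n) lborel (S n j) (exponential_density (mu n))"
    and lam_pos: "\<And>n. n \<ge> 1 \<Longrightarrow> 0 < lam n"
    and mu_pos: "\<And>n. n \<ge> 1 \<Longrightarrow> 0 < mu n"
    and dn_pos: "\<And>n. n \<ge> 1 \<Longrightarrow> 0 < dn n"
    and lam_lim: "lam \<longlonglongrightarrow> lam0"
    and mu_lim: "mu \<longlonglongrightarrow> mu0"
    and dn_lim: "(\<lambda>n. dn n / real n) \<longlonglongrightarrow> d"
    and d_pos: "0 < d"
    and lam_pos': "0 < lam0"
    and mu_lb: "1 / d < mu0"
    and mu_ub: "mu0 < lam0"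
    and x_lt: "x < 1 / mu0"
  shows "(\<lambda>n. outer_prob (M n)
            {\<omega> \<in> space (M n). taubar n d (dn n) (\<lambda>i. A n i \<omega>) (\<lambda>j. S n j \<omega>) \<le> ereal x})
         \<longlonglongrightarrow> 0"
proof -
  have mu0: "mu0 > 0" using mu_lb d_pos by (meson less_trans zero_less_divide_1_iff)
  have xd: "x < d"
  proof -
    have "1 / mu0 < d" using mu_lb mu0 d_pos by (simp add: field_simps)
    then show ?thesis using x_lt by linarith
  qed
  have mx: "mu0 * x < 1" using x_lt mu0 by (simp add: field_simps)
  define p where "p n = 1 / (real n * (1 - mu n * x)\<^sup>2)" for n
  have key: "0 \<le> outer_prob (M n)
            {\<omega> \<in> space (M n). taubar n d (dn n) (\<lambda>i. A n i \<omega>) (\<lambda>j. S n j \<omega>) \<le> ereal x}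
        \<and> outer_prob (M n)
            {\<omega> \<in> space (M n). taubar n d (dn n) (\<lambda>i. A n i \<omega>) (\<lambda>j. S n j \<omega>) \<le> ereal x} \<le> p n"
    if n: "n \<ge> 1" and mxn: "mu n * x < 1" for n
  proof -
    interpret P: prob_space "M n" by (rule ps[OF n])
    let ?E = "{\<omega> \<in> space (M n). taubar n d (dn n) (\<lambda>i. A n i \<omega>) (\<lambda>j. S n j \<omega>) \<le> ereal x}"
    have ind: "P.indep_vars (\<lambda>_. borel) (\<lambda>s. case s of Inl i \<Rightarrow> A n i | Inr j \<Rightarrow> S n j) UNIV"
      by (rule indep[OF n])
    have indS: "P.indep_vars (\<lambda>_. borel) (S n) UNIV"
      using P.indep_vars_reindex_inj[OF ind, of Inr] by (simp add: inj_def)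
    have indA: "P.indep_vars (\<lambda>_. borel) (A n) UNIV"
      using P.indep_vars_reindex_inj[OF ind, of Inl] by (simp add: inj_def)
    have [measurable]: "S n j \<in> borel_measurable (M n)" for j
      using distributed_measurable[OF distS[OF n, of j]] by simp
    have AE1: "AE \<omega> in M n. \<forall>i. 0 \<le> S n i \<omega>"
      using P.exp_AE_nonneg[OF distS[OF n]] by (simp add: AE_all_countable)
    have AE2: "AE \<omega> in M n. \<forall>m. 0 \<le> A n m \<omega>"
      using P.exp_AE_nonneg[OF distA[OF n]] by (simp add: AE_all_countable)
    have AE3: "AE \<omega> in M n. \<forall>N. \<exists>m\<ge>N. 1 \<le> A n m \<omega>"
      using P.tail_small_null[OF indA distA[OF n] lam_pos[OF n]] by (simp add: AE_all_countable)
    have "AE \<omega> in M n. (\<forall>i. 0 \<le> S n i \<omega>) \<and> (\<forall>m. 0 \<le> A n m \<omega>) \<and> (\<forall>N. \<exists>m\<ge>N. 1 \<le> A n m \<omega>)"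
      using AE1 AE2 AE3 by eventually_elim auto
    then obtain N where N: "{\<omega>\<in>space (M n). \<not> ((\<forall>i. 0 \<le> S n i \<omega>) \<and> (\<forall>m. 0 \<le> A n m \<omega>) \<and> (\<forall>N. \<exists>m\<ge>N. 1 \<le> A n m \<omega>))} \<subseteq> N"
      "emeasure (M n) N = 0" "N \<in> sets (M n)"
      by (rule AE_E)
    define C where "C = {\<omega>\<in>space (M n). (\<Sum>i<n. S n i \<omega>) \<le> real n * x}"
    have C: "C \<in> sets (M n)" unfolding C_def by measurable
    define B where "B = C \<union> N"
    have Bs: "B \<in> sets (M n)" using C N(3) by (simp add: B_def)
    have EB: "?E \<inter> space (M n) \<subseteq> B"
    proof
      fix \<omega> assume w: "\<omega> \<in> ?E \<inter> space (M n)"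
      show "\<omega> \<in> B"
      proof (rule ccontr)
        assume "\<omega> \<notin> B"
        then have nN: "\<omega> \<notin> N" and nC: "\<omega> \<notin> C" by (auto simp: B_def)
        have good: "\<forall>i. 0 \<le> S n i \<omega>" "\<forall>m. 0 \<le> A n m \<omega>" "\<forall>N. \<exists>m\<ge>N. 1 \<le> A n m \<omega>"
          using N(1) nN w by blast+
        have sx: "real n * x < (\<Sum>i<n. S n i \<omega>)" using nC w by (auto simp: C_def)
        have "ereal x < taubar n d (dn n) (\<lambda>i. A n i \<omega>) (\<lambda>j. S n j \<omega>)"
          by (rule taubar_gt) (use good unbounded_from_often[of "\<lambda>i. A n i \<omega>"] n xd sx in auto)
        then show False using w by auto
      qed
    qed
    have mB: "measure (M n) B \<le> p n"
    proof -
      have "measure (M n) B \<le> measure (M n) C + measure (M n) N"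
        unfolding B_def using C N(3) by (rule measure_Un_le)
      also have "measure (M n) N = 0" using N(2) by (simp add: P.emeasure_eq_measure)
      also have "measure (M n) C \<le> p n" unfolding C_def p_def
        by (rule P.erlang_sum_bound[OF indS distS[OF n] mu_pos[OF n] n mxn])
      finally show ?thesis by simp
    qed
    let ?Q = "{measure (M n) B' | B'. B' \<in> sets (M n) \<and> ?E \<inter> space (M n) \<subseteq> B'}"
    have bdd: "bdd_below ?Q" by (rule bdd_belowI[of _ 0]) auto
    have "outer_prob (M n) ?E \<le> measure (M n) B"
      unfolding outer_prob_def by (rule cInf_lower) (use Bs EB bdd in auto)
    moreover have "0 \<le> outer_prob (M n) ?E"
      unfolding outer_prob_def by (rule cInf_greatest) (use Bs EB in auto)
    ultimately show ?thesis using mB by simp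
  qed
  have ev: "eventually (\<lambda>n. n \<ge> 1 \<and> mu n * x < 1) sequentially"
  proof -
    have "((\<lambda>n. mu n * x) \<longlongrightarrow> mu0 * x) sequentially" by (intro tendsto_intros mu_lim)
    then have "eventually (\<lambda>n. mu n * x < 1) sequentially" using mx by (rule order_tendstoD(2))
    moreover have "eventually (\<lambda>n::nat. n \<ge> 1) sequentially" by (rule eventually_ge_at_top)
    ultimately show ?thesis by eventually_elim auto
  qed
  have plim: "p \<longlonglongrightarrow> 0"
  proof -
    have c: "(1 - mu0 * x)\<^sup>2 \<noteq> 0" using mx by simp
    have "(\<lambda>n. (1 / real n) * (1 / (1 - mu n * x)\<^sup>2)) \<longlonglongrightarrow> 0 * (1 / (1 - mu0 * x)\<^sup>2)"
      by (intro tendsto_intros mu_lim lim_1_over_n c)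
    then show ?thesis unfolding p_def by simp
  qed
  show ?thesis
  proof (rule tendsto_sandwich[OF _ _ tendsto_const plim])
    show "eventually (\<lambda>n. 0 \<le> outer_prob (M n)
            {\<omega> \<in> space (M n). taubar n d (dn n) (\<lambda>i. A n i \<omega>) (\<lambda>j. S n j \<omega>) \<le> ereal x}) sequentially"
      using ev by eventually_elim (use key in blast)
    show "eventually (\<lambda>n. outer_prob (M n)
            {\<omega> \<in> space (M n). taubar n d (dn n) (\<lambda>i. A n i \<omega>) (\<lambda>j. S n j \<omega>) \<le> ereal x} \<le> p n) sequentially"
      using ev by eventually_elim (use key in blast)
  qed
qed


end
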